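(* Let $q$ be an odd prime power and $\varphi_3$ the coloring defined below (with $d=3$). No set $S\subseteq(\mathbb{F}_q^* )^3$ of $6$ vectors has a leftover structure under $\varphi_3$.
   Context: Let $d=3$. $\mathbb{F}_q^*$ is the set of nonzero elements of $\mathbb{F}_q$, endowed with an arbitrary fixed linear order; $(\mathbb{F}_q^* )^d$ is ordered lexicographically with respect to it. Let $C_d = \mathrm{DOT} \sqcup \mathrm{ZERO}\sqcup\mathrm{UP}\sqcup\mathrm{DOWN}$, where $\mathrm{DOT} = \mathbb{F}_q^*$ and ZERO, UP, DOWN are three disjoint copies of $\{1,\dots,d\}\times \mathbb{F}_q$. For distinct $x<y$ in $(\mathbb{F}_q^* )^d$, let $i$ be the first coordinate where $x$ and $y$ differ, and $x\cdot y$ the standard dot product; $\varphi_d(x,y)=\varphi_d(y,x)$ is $(i,x_i+y_i)$ in ZERO if $x\cdot y=0$; $(i,x_i+y_i)$ in UP if $x\cdot y\ne 0$ and $x\cdot y=x\cdot x$; $(i,x_i+y_i)$ in DOWN if $x\cdot y\notin\{0,x\cdot x\}$ and $x\cdot y=y\cdot y$; and $x\cdot y\in\mathrm{DOT}$ otherwise. For a vertex set $A$, $\varphi_d(A)$ is the set of colors on pairs inside $A$. $S$ has a leftover structure under $\varphi_d$ if $|S|=1$, or $S$ has a partition $S=A\cup B$ into nonempty sets such that $A$ and $B$ each have a leftover structure, $\varphi_d(A)\cap\varphi_d(B)=\emptyset$, and there is a color $\gamma$ with $\varphi_d(a,b)=\gamma$ for all $a\in A$, $b\in B$ and $\gamma\notin\varphi_d(A)\cup\varphi_d(B)$.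 *)

theory Defs
  imports Main
begin

text \<open>Vectors of (F_q^*)^d are lists of length d with nonzero entries (coordinates
  indexed 0..d-1 internally; colors record the 1-based index).\<close>

datatype 'a color = Dot 'a | Zero nat 'a | Up nat 'a | Down nat 'a

definition vecs :: "nat \<Rightarrow> ('a::zero) list set" where
  "vecs d = {x. length x = d \<and> (\<forall>i<length x. x ! i \<noteq> 0)}"

definition dotp :: "('a::comm_semiring_1) list \<Rightarrow> 'a list \<Rightarrow> 'a" where
  "dotp x y = sum_list (map2 (*) x y)"

definition first_diff :: "'a list \<Rightarrow> 'a list \<Rightarrow> nat" where
  "first_diff x y = (LEAST i. i < length x \<and> x ! i \<noteq> y ! i)"

definition lex_less :: "'a rel \<Rightarrow> 'a list \<Rightarrow> 'a list \<Rightarrow> bool" where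
  "lex_less r x y \<longleftrightarrow> (\<exists>i<length x. (\<forall>j<i. x ! j = y ! j) \<and> x ! i \<noteq> y ! i \<and> (x ! i, y ! i) \<in> r)"

definition col :: "('a::comm_ring_1) list \<Rightarrow> 'a list \<Rightarrow> 'a color" where
  "col x y = (let i = first_diff x y; s = x ! i + y ! i; p = dotp x y in
     if p = 0 then Zero (i + 1) s
     else if p = dotp x x then Up (i + 1) s
     else if p = dotp y y then Down (i + 1) s
     else Dot p)"

definition phi :: "'a rel \<Rightarrow> ('a::comm_ring_1) list \<Rightarrow> 'a list \<Rightarrow> 'a color" where
  "phi r x y = (if lex_less r x y then col x y else col y x)"

definition colors :: "'a rel \<Rightarrow> ('a::comm_ring_1) list set \<Rightarrow> 'a color set" where
  "colors r A = {phi r x y | x y. x \<in> A \<and> y \<in> A \<and> x \<noteq> y}"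

inductive leftover :: "'a rel \<Rightarrow> ('a::comm_ring_1) list set \<Rightarrow> bool" for r where
  single: "leftover r {x}"
| split: "\<lbrakk> A \<noteq> {}; B \<noteq> {}; A \<inter> B = {}; leftover r A; leftover r B;
           colors r A \<inter> colors r B = {};
           \<forall>a\<in>A. \<forall>b\<in>B. phi r a b = \<gamma>;
           \<gamma> \<notin> colors r A \<union> colors r B \<rbrakk> \<Longrightarrow> leftover r (A \<union> B)"

end

theory Submission
  imports Defs
begin

lemma list3: "length x = 3 \<Longrightarrow> x = [x!0, x!1, x!2]"
  by (simp add: list_eq_iff_nth_eq less_Suc_eq numeral_eq_Suc nth_Cons')

lemma vecsD: assumes "x \<in> vecs 3" shows "length x = 3" "x!0 \<noteq> 0" "x!1 \<noteq> 0" "x!2 \<noteq> 0"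
  using assms by (auto simp: vecs_def)

lemma eq3: "length x = 3 \<Longrightarrow> length y = 3 \<Longrightarrow> x = y \<longleftrightarrow> (x!0 = y!0 \<and> x!1 = y!1 \<and> x!2 = y!2)"
  by (metis list3)

lemma dotp3: "length x = 3 \<Longrightarrow> length y = 3 \<Longrightarrow> dotp x y = x!0*y!0 + x!1*y!1 + x!2*y!2"
  apply (subst list3[of x], assumption)
  apply (subst list3[of y], assumption)
  by (simp add: dotp_def add.assoc)

lemma fd: assumes "length x = 3" "length y = 3" "x \<noteq> y"
  shows "first_diff x y < 3 \<and> x!(first_diff x y) \<noteq> y!(first_diff x y) \<and> (\<forall>j<first_diff x y. x!j = y!j)"
proof -
  have ex: "\<exists>i. i < length x \<and> x!i \<noteq> y!i" using assms by (metis list_eq_iff_nth_eq)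
  have 1: "first_diff x y < length x \<and> x!(first_diff x y) \<noteq> y!(first_diff x y)"
    unfolding first_diff_def by (rule LeastI_ex[OF ex])
  have 2: "\<forall>j<first_diff x y. x!j = y!j"
  proof (intro allI impI)
    fix j assume j: "j < first_diff x y"
    hence "\<not> (j < length x \<and> x!j \<noteq> y!j)" unfolding first_diff_def by (rule not_less_Least)
    thus "x!j = y!j" using j 1 by auto
  qed
  show ?thesis using 1 2 assms by auto
qed

fun cinfo :: "'a color \<Rightarrow> (nat \<times> 'a) option" where
  "cinfo (Dot p) = None" | "cinfo (Zero k s) = Some (k, s)"
| "cinfo (Up k s) = Some (k, s)" | "cinfo (Down k s) = Some (k, s)"

lemma col_coord: "cinfo (col x y) = Some (k, s) \<Longrightarrow> k = Suc (first_diff x y) \<and> s = x!(first_diff x y) + y!(first_diff x y)"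
  by (auto simp: col_def Let_def split: if_splits)

lemma col_none: "cinfo (col x y) = None \<Longrightarrow> col x y = Dot (dotp x y) \<and> dotp x y \<noteq> 0 \<and> dotp x y \<noteq> dotp x x \<and> dotp x y \<noteq> dotp y y"
  by (auto simp: col_def Let_def split: if_splits)

lemma col_Zero: "col x y = Zero k s \<Longrightarrow> dotp x y = 0"
  by (auto simp: col_def Let_def split: if_splits)
lemma col_Up: "col x y = Up k s \<Longrightarrow> dotp x y = dotp x x"
  by (auto simp: col_def Let_def split: if_splits)
lemma col_Down: "col x y = Down k s \<Longrightarrow> dotp x y = dotp y y"
  by (auto simp: col_def Let_def split: if_splits)

lemma dotp_comm: "x \<in> vecs 3 \<Longrightarrow> y \<in> vecs 3 \<Longrightarrow> dotp x y = dotp y x"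
  using dotp3 vecsD by (metis mult.commute)

lemma phi_coord:
  assumes "x \<in> vecs 3" "y \<in> vecs 3" "x \<noteq> y" "cinfo (phi r x y) = Some (k, s)"
  shows "\<exists>i<3. k = Suc i \<and> x!i \<noteq> y!i \<and> (\<forall>j<i. x!j = y!j) \<and> s = x!i + y!i"
proof (cases "lex_less r x y")
  case True
  hence "cinfo (col x y) = Some (k, s)" using assms(4) by (simp add: phi_def)
  thus ?thesis using col_coord fd[of x y] vecsD assms by metis
next
  case False
  hence "cinfo (col y x) = Some (k, s)" using assms(4) by (simp add: phi_def)
  hence "k = Suc (first_diff y x) \<and> s = y!(first_diff y x) + x!(first_diff y x)" by (rule col_coord)
  moreover have "first_diff y x < 3 \<and> y!(first_diff y x) \<noteq> x!(first_diff y x) \<and> (\<forall>j<first_diff y x. y!j = x!j)"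
    using fd[of y x] vecsD assms by metis
  ultimately show ?thesis by (metis add.commute)
qed

lemma phi_none:
  assumes "x \<in> vecs 3" "y \<in> vecs 3" "cinfo (phi r x y) = None"
  shows "phi r x y = Dot (dotp x y) \<and> dotp x y \<noteq> 0 \<and> dotp x y \<noteq> dotp x x \<and> dotp x y \<noteq> dotp y y"
  using assms col_none dotp_comm unfolding phi_def by (metis (full_types))

lemma phi_Zero: "x \<in> vecs 3 \<Longrightarrow> y \<in> vecs 3 \<Longrightarrow> phi r x y = Zero k s \<Longrightarrow> dotp x y = 0"
  unfolding phi_def by (metis col_Zero dotp_comm)

lemma phi_Up: "x \<in> vecs 3 \<Longrightarrow> y \<in> vecs 3 \<Longrightarrow> phi r x y = Up k s \<Longrightarrow>
   (lex_less r x y \<and> dotp x y = dotp x x) \<or> (\<not> lex_less r x y \<and> dotp x y = dotp y y)"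
  unfolding phi_def by (metis col_Up dotp_comm)

lemma phi_Down: "x \<in> vecs 3 \<Longrightarrow> y \<in> vecs 3 \<Longrightarrow> phi r x y = Down k s \<Longrightarrow>
   (lex_less r x y \<and> dotp x y = dotp y y) \<or> (\<not> lex_less r x y \<and> dotp x y = dotp x x)"
  unfolding phi_def by (metis col_Down dotp_comm)

lemma lex_iff:
  assumes "i < length x" "\<forall>j<i. x!j = y!j" "x!i \<noteq> y!i"
  shows "lex_less r x y \<longleftrightarrow> (x!i, y!i) \<in> r"
proof
  assume "lex_less r x y"
  then obtain i' where i': "i' < length x" "\<forall>j<i'. x!j = y!j" "x!i' \<noteq> y!i'" "(x!i', y!i') \<in> r"
    unfolding lex_less_def by blast
  have "i' = i" using i' assms by (metis linorder_neqE_nat)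
  thus "(x!i, y!i) \<in> r" using i' by simp
next
  assume "(x!i, y!i) \<in> r" thus "lex_less r x y" using assms unfolding lex_less_def by blast
qed

lemma phi_sym:
  assumes lin: "linear_order_on {x. x \<noteq> 0} r" and "x \<in> vecs 3" "y \<in> vecs 3"
  shows "phi r x y = phi r y x"
proof (cases "x = y")
  case False
  define i where "i = first_diff x y"
  have f: "i < 3" "x!i \<noteq> y!i" "\<forall>j<i. x!j = y!j" using fd[of x y] vecsD assms False i_def by auto
  have nz: "x!i \<noteq> 0" "y!i \<noteq> 0" using assms(2,3) f(1) unfolding vecs_def by auto
  have lx: "i < length x" "i < length y" using f(1) vecsD(1)[OF assms(2)] vecsD(1)[OF assms(3)] by simp_all
  have l1: "lex_less r x y \<longleftrightarrow> (x!i, y!i) \<in> r" by (rule lex_iff[OF lx(1) f(3) f(2)])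
  have l2: "lex_less r y x \<longleftrightarrow> (y!i, x!i) \<in> r" by (rule lex_iff[OF lx(2)]) (use f in auto)
  have tot: "(x!i, y!i) \<in> r \<or> (y!i, x!i) \<in> r" using lin nz f(2)
    unfolding linear_order_on_def total_on_def by auto
  have anti: "\<not> ((x!i, y!i) \<in> r \<and> (y!i, x!i) \<in> r)" using lin f(2)
    unfolding linear_order_on_def partial_order_on_def antisym_def by auto
  show ?thesis unfolding phi_def using l1 l2 tot anti by auto
qed simp

definition coll :: "('a::comm_ring_1) list \<Rightarrow> 'a list \<Rightarrow> 'a list \<Rightarrow> bool" where
  "coll c a b \<longleftrightarrow> (a!1-c!1)*(b!2-c!2) = (a!2-c!2)*(b!1-c!1) \<and> (a!2-c!2)*(b!0-c!0) = (a!0-c!0)*(b!2-c!2)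
     \<and> (a!0-c!0)*(b!1-c!1) = (a!1-c!1)*(b!0-c!0)"

lemma algCL:
  fixes ux uy uz vx vy vz cx cy cz :: "'a::field"
  assumes "uy*vz = uz*vy" "uz*vx = ux*vz" "ux*vy = uy*vx"
    "cx*ux + cy*uy + cz*uz = cx*vx+cy*vy+cz*vz" "cx*ux+cy*uy+cz*uz \<noteq> 0"
  shows "ux = vx \<and> uy = vy \<and> uz = vz"
  using assms by algebra

lemma algCLc:
  fixes ux uy uz vx vy vz :: "'a::field"
  assumes "uy*vz = uz*vy" "uz*vx = ux*vz" "ux*vy = uy*vx"
    "(ux = vx \<and> ux \<noteq> 0) \<or> (uy = vy \<and> uy \<noteq> 0) \<or> (uz = vz \<and> uz \<noteq> 0)"
  shows "ux = vx \<and> uy = vy \<and> uz = vz"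
  using assms(4)
proof (elim disjE conjE)
  assume h: "ux = vx" "ux \<noteq> 0"
  have "ux*vy = ux*uy" using h assms(3) by (simp add: mult.commute)
  moreover have "ux*vz = ux*uz" using h assms(2) by (simp add: mult.commute)
  ultimately show ?thesis using h by simp
next
  assume h: "uy = vy" "uy \<noteq> 0"
  have "uy*vx = uy*ux" using h assms(3) by (simp add: mult.commute)
  moreover have "uy*vz = uy*uz" using h assms(1) by (simp add: mult.commute)
  ultimately show ?thesis using h by simp
next
  assume h: "uz = vz" "uz \<noteq> 0"
  have "uz*vx = uz*ux" using h assms(2) by (simp add: mult.commute)
  moreover have "uz*vy = uz*uy" using h assms(1) by (simp add: mult.commute)
  ultimately show ?thesis using h by simp
qed

lemma CL:
  fixes r :: "('a::field) rel"
  assumes v: "a \<in> vecs 3" "b \<in> vecs 3" "c \<in> vecs 3" and d: "a \<noteq> b" "a \<noteq> c" "b \<noteq> c"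
    and st: "phi r c a = phi r c b"
  shows "\<not> coll c a b"
proof
  assume co: "coll c a b"
  have len: "length a = 3" "length b = 3" "length c = 3" using v vecsD by auto
  have "a!0 - c!0 = b!0 - c!0 \<and> a!1 - c!1 = b!1 - c!1 \<and> a!2 - c!2 = b!2 - c!2"
  proof (cases "cinfo (phi r c a)")
    case None
    hence N2: "cinfo (phi r c b) = None" using st by simp
    have e: "dotp c a = dotp c b" "dotp c a \<noteq> dotp c c"
      using phi_none[OF v(3) v(1) None] phi_none[OF v(3) v(2) N2] st by auto
    show ?thesis
      apply (rule algCL[where cx="c!0" and cy="c!1" and cz="c!2"])
      using co e unfolding coll_def dotp3[OF len(3) len(1)] dotp3[OF len(3) len(2)] dotp3[OF len(3) len(3)]
      by (auto simp: algebra_simps)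
  next
    case (Some ks)
    obtain k s where ks: "ks = (k, s)" by fastforce
    obtain i where i: "i < 3" "k = Suc i" "c!i \<noteq> a!i" "s = c!i + a!i"
      using phi_coord[OF v(3) v(1) _ Some[unfolded ks]] d by metis
    have Sb: "cinfo (phi r c b) = Some (k, s)" using Some ks st by simp
    obtain i' where i': "i' < 3" "k = Suc i'" "s = c!i' + b!i'"
      using phi_coord[OF v(3) v(2) _ Sb] d by metis
    have "i = i'" using i i' by simp
    hence ab: "a!i = b!i" using i i' by simp
    have "(a!0 - c!0 = b!0 - c!0 \<and> a!0 - c!0 \<noteq> 0) \<or> (a!1 - c!1 = b!1 - c!1 \<and> a!1 - c!1 \<noteq> 0) \<or> (a!2 - c!2 = b!2 - c!2 \<and> a!2 - c!2 \<noteq> 0)"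
      using i(1,3) ab by (auto simp: less_Suc_eq numeral_eq_Suc)
    thus ?thesis using co unfolding coll_def by (intro algCLc) auto
  qed
  hence "a = b" using eq3 len by auto
  thus False using d by simp
qed

lemma alg1:
  fixes xa xb xc pa pb pc qa qb qc ra rb rc :: "'a::field"
  assumes "xa*pa + xb*pb + xc*pc = xa*ra + xb*rb + xc*rc"
    "xa*qa + xb*qb + xc*qc = xa*ra + xb*rb + xc*rc"
    "pa = ra" "qa = ra" "(pb-rb)*(qc-rc) \<noteq> (pc-rc)*(qb-rb)"
  shows "xb = 0"
  using assms by algebra

lemma alg1c:
  fixes xa xb xc pa pb pc qa qb qc ra rb rc :: "'a::field"
  assumes "xa*pa + xb*pb + xc*pc = xa*ra + xb*rb + xc*rc"
    "xa*qa + xb*qb + xc*qc = xa*ra + xb*rb + xc*rc"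
    "pa = ra" "qa = ra" "(pb-rb)*(qc-rc) \<noteq> (pc-rc)*(qb-rb)"
  shows "xc = 0"
  using assms by algebra

lemma algPar:
  fixes ux uy uz vx vy vz xx xy xz yx yy yz :: "'a::field"
  assumes "\<not> (uy*vz = uz*vy \<and> uz*vx = ux*vz \<and> ux*vy = uy*vx)"
    "xx*ux+xy*uy+xz*uz = 0" "xx*vx+xy*vy+xz*vz = 0"
    "yx*ux+yy*uy+yz*uz = 0" "yx*vx+yy*vy+yz*vz = 0"
  shows "xx*yy = xy*yx \<and> xx*yz = xz*yx \<and> xy*yz = xz*yy"
  using assms by algebra

lemma algY:
  fixes xx xy xz yx yy yz zx zy zz :: "'a::field"
  assumes "xx*yy = xy*yx" "xx*yz = xz*yx" "xy*yz = xz*yy" "xx \<noteq> 0"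
    "yx*zx+yy*zy+yz*zz = 0" "xx*zx+xy*zy+xz*zz \<noteq> 0"
  shows "yx = 0" "yy = 0" "yz = 0"
  using assms by algebra+

lemma algX:
  fixes dx dy dz ex ey ez ax ay az :: "'a::field"
  assumes "dx*ey = dy*ex" "dx*ez = dz*ex" "dy*ez = dz*ey" "dx \<noteq> 0" "ex \<noteq> 0"
    "ex*ax+ey*ay+ez*az = ex*dx+ey*dy+ez*dz" "dx*ax+dy*ay+dz*az \<noteq> dx*dx+dy*dy+dz*dz"
  shows False
  using assms by algebra


lemma dotpV: "x \<in> vecs 3 \<Longrightarrow> y \<in> vecs 3 \<Longrightarrow> dotp x y = x!0*y!0 + x!1*y!1 + x!2*y!2"
  using dotp3 vecsD by metis

lemma phi_coordS:
  assumes "x \<in> vecs 3" "y \<in> vecs 3" "x \<noteq> y" "cinfo (phi r x y) = Some (Suc i, s)"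
  shows "i < 3 \<and> x!i \<noteq> y!i \<and> (\<forall>j<i. x!j = y!j) \<and> s = x!i + y!i"
  using phi_coord[OF assms] by auto

lemma vecs_nz: "x \<in> vecs 3 \<Longrightarrow> i < 3 \<Longrightarrow> x!i \<noteq> 0"
  by (auto simp: vecs_def)

lemma Ylem:
  fixes r :: "('a::field) rel"
  assumes v: "a1 \<in> vecs 3" "a2 \<in> vecs 3" "b1 \<in> vecs 3" "b2 \<in> vecs 3" "b3 \<in> vecs 3"
    and d: "a1 \<noteq> a2" "b1 \<noteq> b2" "b1 \<noteq> b3" "b2 \<noteq> b3"
      "a1 \<noteq> b1" "a1 \<noteq> b2" "a1 \<noteq> b3" "a2 \<noteq> b1" "a2 \<noteq> b2" "a2 \<noteq> b3"
    and st: "phi r b3 b1 = phi r b3 b2"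
    and g: "phi r a1 b1 = g" "phi r a1 b2 = g" "phi r a1 b3 = g"
      "phi r a2 b1 = g" "phi r a2 b2 = g" "phi r a2 b3 = g"
  shows False
proof -
  have nc: "\<not> coll b3 b1 b2" by (rule CL[OF v(3,4,5) d(2,3,4) st])
  have len: "length a1 = 3" "length a2 = 3" using v vecsD by auto
  show False
  proof (cases "cinfo g")
    case None
    have D: "phi r a b = Dot (dotp a b) \<and> dotp a b \<noteq> 0" if "a \<in> vecs 3" "b \<in> vecs 3" "phi r a b = g" for a b
      using phi_none[OF that(1,2)] None that(3) by auto
    have e: "dotp a1 b1 = dotp a1 b3" "dotp a1 b2 = dotp a1 b3" "dotp a2 b1 = dotp a1 b1"
      "dotp a2 b2 = dotp a1 b2" "dotp a2 b3 = dotp a1 b3" "dotp a1 b3 \<noteq> 0"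
      using D[OF v(1) v(3) g(1)] D[OF v(1) v(4) g(2)] D[OF v(1) v(5) g(3)]
        D[OF v(2) v(3) g(4)] D[OF v(2) v(4) g(5)] D[OF v(2) v(5) g(6)] g by auto
    note DV = dotpV[OF v(1) v(3)] dotpV[OF v(1) v(4)] dotpV[OF v(1) v(5)]
      dotpV[OF v(2) v(3)] dotpV[OF v(2) v(4)] dotpV[OF v(2) v(5)]
    note ex = e[unfolded DV]
    note ncx = nc[unfolded coll_def]
    have par: "a1!0*(a1!1-a2!1) = a1!1*(a1!0-a2!0) \<and> a1!0*(a1!2-a2!2) = a1!2*(a1!0-a2!0) \<and> a1!1*(a1!2-a2!2) = a1!2*(a1!1-a2!1)"
      apply (rule algPar[where ux="b1!0-b3!0" and uy="b1!1-b3!1" and uz="b1!2-b3!2" and vx="b2!0-b3!0" and vy="b2!1-b3!1" and vz="b2!2-b3!2"])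
      using ncx apply simp
      using ex by algebra+
    have wb3: "(a1!0-a2!0)*b3!0 + (a1!1-a2!1)*b3!1 + (a1!2-a2!2)*b3!2 = 0" using ex by algebra
    have a1b3: "a1!0*b3!0 + a1!1*b3!1 + a1!2*b3!2 \<noteq> 0" using ex(6) .
    have w: "a1!0-a2!0 = 0" "a1!1-a2!1 = 0" "a1!2-a2!2 = 0"
      using algY[OF par[THEN conjunct1] par[THEN conjunct2, THEN conjunct1] par[THEN conjunct2, THEN conjunct2]
          vecs_nz[OF v(1), of 0] wb3 a1b3] by simp_all
    hence "a1 = a2" using eq3 len by auto
    thus False using d by simp
  next
    case (Some ks)
    obtain k s where ks: "g = g" "cinfo g = Some (k, s)" using Some by (cases ks) auto
    obtain i where i: "k = Suc i" using phi_coord[OF v(1) v(3) d(5)] ks g(1) by metis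
    have C: "i < 3 \<and> a!i \<noteq> b!i \<and> (\<forall>j<i. a!j = b!j) \<and> s = a!i + b!i"
      if "a \<in> vecs 3" "b \<in> vecs 3" "a \<noteq> b" "phi r a b = g" for a b
      using phi_coordS[OF that(1-3)] that(4) ks i by auto
    note C11 = C[OF v(1) v(3) d(5) g(1)] and C12 = C[OF v(1) v(4) d(6) g(2)]
      and C13 = C[OF v(1) v(5) d(7) g(3)] and C21 = C[OF v(2) v(3) d(8) g(4)]
      and C22 = C[OF v(2) v(4) d(9) g(5)] and C23 = C[OF v(2) v(5) d(10) g(6)]
    have i0: "i = 0"
    proof (rule ccontr)
      assume "i \<noteq> 0"
      hence "b1!0 = b3!0 \<and> b2!0 = b3!0 \<and> b1!1 = b3!1 \<and> b2!1 = b3!1"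
        using C11 C12 C13 by (cases "i = 1") (auto simp: less_Suc_eq numeral_eq_Suc)
      hence "coll b3 b1 b2" unfolding coll_def by simp
      thus False using nc by simp
    qed
    have b0: "b1!0 = b3!0" "b2!0 = b3!0" "a2!0 = a1!0" using C11 C12 C13 C21 i0 by auto
    have nz: "a1!0 \<noteq> b1!0" using C11 i0 by simp
    have cases: "(dotp a1 b1 = dotp a1 b3 \<and> dotp a1 b2 = dotp a1 b3) \<or>
        (dotp a1 b1 = dotp a2 b1 \<and> dotp a1 b2 = dotp a2 b2 \<and> dotp a1 b3 = dotp a2 b3)"
    proof -
      define L where "L = ((a1!0, b1!0) \<in> r)"
      have lex: "lex_less r a b = L" if "a \<in> vecs 3" "a!0 = a1!0" "b!0 = b1!0" for a b
      proof -
        have "0 < length a" using vecsD(1)[OF that(1)] by simp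
        thus ?thesis using lex_iff[of 0 a b r] that nz unfolding L_def by auto
      qed
      have l: "lex_less r a1 b1 = L" "lex_less r a1 b2 = L" "lex_less r a1 b3 = L"
        "lex_less r a2 b1 = L" "lex_less r a2 b2 = L" "lex_less r a2 b3 = L"
        using lex[OF v(1)] lex[OF v(2)] b0 by auto
      show ?thesis
      proof (cases g)
        case (Zero k' s')
        thus ?thesis using phi_Zero[OF v(1) v(3)] phi_Zero[OF v(1) v(4)] phi_Zero[OF v(1) v(5)] g by metis
      next
        case (Up k' s')
        note U = phi_Up[OF v(1) v(3)] phi_Up[OF v(1) v(4)] phi_Up[OF v(1) v(5)]
          phi_Up[OF v(2) v(3)] phi_Up[OF v(2) v(4)] phi_Up[OF v(2) v(5)]
        show ?thesis
        proof (cases L)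
          case True thus ?thesis using U g l Up by metis
        next
          case False thus ?thesis using U g l Up dotp_comm v by metis
        qed
      next
        case (Down k' s')
        note U = phi_Down[OF v(1) v(3)] phi_Down[OF v(1) v(4)] phi_Down[OF v(1) v(5)]
          phi_Down[OF v(2) v(3)] phi_Down[OF v(2) v(4)] phi_Down[OF v(2) v(5)]
        show ?thesis
        proof (cases L)
          case False thus ?thesis using U g l Down by metis
        next
          case True thus ?thesis using U g l Down dotp_comm v by metis
        qed
      next
        case (Dot p) thus ?thesis using ks by simp
      qed
    qed
    have n0: "(b1!1-b3!1)*(b2!2-b3!2) \<noteq> (b1!2-b3!2)*(b2!1-b3!1)"
      using nc b0 unfolding coll_def by auto
    show False using cases
    proof
      assume h: "dotp a1 b1 = dotp a1 b3 \<and> dotp a1 b2 = dotp a1 b3"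
      have h1: "a1!0*b1!0 + a1!1*b1!1 + a1!2*b1!2 = a1!0*b3!0 + a1!1*b3!1 + a1!2*b3!2"
        using h[THEN conjunct1] unfolding dotpV[OF v(1) v(3)] dotpV[OF v(1) v(5)] .
      have h2: "a1!0*b2!0 + a1!1*b2!1 + a1!2*b2!2 = a1!0*b3!0 + a1!1*b3!1 + a1!2*b3!2"
        using h[THEN conjunct2] unfolding dotpV[OF v(1) v(4)] dotpV[OF v(1) v(5)] .
      have "a1!1 = 0" by (rule alg1[OF h1 h2 b0(1) b0(2) n0])
      thus False using vecs_nz[OF v(1), of 1] by simp
    next
      assume h: "dotp a1 b1 = dotp a2 b1 \<and> dotp a1 b2 = dotp a2 b2 \<and> dotp a1 b3 = dotp a2 b3"
      have w: "(a1!0-a2!0)*b1!0 + (a1!1-a2!1)*b1!1 + (a1!2-a2!2)*b1!2 = (a1!0-a2!0)*b3!0 + (a1!1-a2!1)*b3!1 + (a1!2-a2!2)*b3!2"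
        "(a1!0-a2!0)*b2!0 + (a1!1-a2!1)*b2!1 + (a1!2-a2!2)*b2!2 = (a1!0-a2!0)*b3!0 + (a1!1-a2!1)*b3!1 + (a1!2-a2!2)*b3!2"
        using h[unfolded dotpV[OF v(1) v(3)] dotpV[OF v(1) v(4)] dotpV[OF v(1) v(5)]
          dotpV[OF v(2) v(3)] dotpV[OF v(2) v(4)] dotpV[OF v(2) v(5)]] by algebra+
      have "a1!1-a2!1 = 0" by (rule alg1[OF w(1) w(2) b0(1) b0(2) n0])
      moreover have "a1!2-a2!2 = 0" by (rule alg1c[OF w(1) w(2) b0(1) b0(2) n0])
      ultimately have "a1 = a2" using eq3[OF len] b0 by auto
      thus False using d by simp
    qed
  qed
qed

lemma Xlem:
  fixes r :: "('a::field) rel"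
  assumes v: "a \<in> vecs 3" "b \<in> vecs 3" "c \<in> vecs 3" "d \<in> vecs 3" "e \<in> vecs 3"
    and dd: "a \<noteq> b" "a \<noteq> c" "b \<noteq> c" "d \<noteq> a" "d \<noteq> b" "d \<noteq> c" "e \<noteq> a" "e \<noteq> b" "e \<noteq> c" "e \<noteq> d"
    and st: "phi r c a = phi r c b"
    and gd: "phi r d a = g1" "phi r d b = g1" "phi r d c = g1"
    and ge: "phi r e a = g2" "phi r e b = g2" "phi r e c = g2" "phi r e d = g2"
  shows False
proof -
  have nc: "\<not> coll c a b" by (rule CL[OF v(1,2,3) dd(1,2,3) st])
  have len: "length a = 3" "length b = 3" "length c = 3" "length d = 3" "length e = 3" using v vecsD by auto
  have C: "i < 3 \<and> x!i \<noteq> y!i \<and> (\<forall>j<i. x!j = y!j) \<and> s = x!i + y!i"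
    if "x \<in> vecs 3" "y \<in> vecs 3" "x \<noteq> y" "phi r x y = g" "cinfo g = Some (Suc i, s)" for x y g i s
    using phi_coordS[OF that(1-3)] that(4,5) by auto
  have D: "dotp x y = p \<and> p \<noteq> dotp x x"
    if "x \<in> vecs 3" "y \<in> vecs 3" "phi r x y = g" "cinfo g = None" "g = Dot p" for x y g p
    using phi_none[where r=r, OF that(1,2)] that(3-5) by auto
  have abc0: "a!0 = c!0 \<and> b!0 = c!0" if P: "x \<in> vecs 3" "x \<noteq> a" "x \<noteq> b" "x \<noteq> c"
     "phi r x a = g" "phi r x b = g" "phi r x c = g" "cinfo g = Some (k, s)" for x g k s
  proof -
    obtain i where i: "k = Suc i" using phi_coord[OF P(1) v(1) P(2)] P(5,8) by metis
    note Ca = C[OF P(1) v(1) P(2) P(5) P(8)[unfolded i]]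
      and Cb = C[OF P(1) v(2) P(3) P(6) P(8)[unfolded i]]
      and Cc = C[OF P(1) v(3) P(4) P(7) P(8)[unfolded i]]
    show ?thesis using Ca Cb Cc by (cases "i = 0") auto
  qed
  have n0: "(a!1-c!1)*(b!2-c!2) \<noteq> (a!2-c!2)*(b!1-c!1)" if "a!0 = c!0" "b!0 = c!0"
    using nc that unfolding coll_def by auto
  note DV = dotpV[OF v(4) v(1)] dotpV[OF v(4) v(2)] dotpV[OF v(4) v(3)] dotpV[OF v(4) v(4)]
    dotpV[OF v(5) v(1)] dotpV[OF v(5) v(2)] dotpV[OF v(5) v(3)] dotpV[OF v(5) v(4)]
  show False
  proof (cases "cinfo g1")
    case (Some ks)
    obtain k s where ks: "cinfo g1 = Some (k, s)" using Some by (cases ks) auto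
    obtain i where i: "k = Suc i" using phi_coord[OF v(4) v(1) dd(4)] ks gd(1) by metis
    note Ca = C[OF v(4) v(1) dd(4) gd(1) ks[unfolded i]]
      and Cb = C[OF v(4) v(2) dd(5) gd(2) ks[unfolded i]]
      and Cc = C[OF v(4) v(3) dd(6) gd(3) ks[unfolded i]]
    have i0: "i = 0"
    proof (rule ccontr)
      assume "i \<noteq> 0"
      hence "a!0 = c!0 \<and> b!0 = c!0 \<and> a!1 = c!1 \<and> b!1 = c!1"
        using Ca Cb Cc by (cases "i = 1") (auto simp: less_Suc_eq numeral_eq_Suc)
      hence "coll c a b" unfolding coll_def by simp
      thus False using nc by simp
    qed
    have a0: "a!0 = c!0" "b!0 = c!0" "d!0 \<noteq> a!0" using Ca Cb Cc i0 by auto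
    show False
    proof (cases "cinfo g2")
      case (Some ks')
      obtain k' s' where ks': "cinfo g2 = Some (k', s')" using Some by (cases ks') auto
      obtain i' where i': "k' = Suc i'" using phi_coord[OF v(5) v(1) dd(7)] ks' ge(1) by metis
      note Ea = C[OF v(5) v(1) dd(7) ge(1) ks'[unfolded i']]
        and Ed = C[OF v(5) v(4) dd(10) ge(4) ks'[unfolded i']]
      have "a!0 = d!0" using Ea Ed by (cases "i' = 0") auto
      thus False using a0 by simp
    next
      case None
      then obtain p where p: "g2 = Dot p" by (cases g2) auto
      have h: "dotp e a = p" "dotp e b = p" "dotp e c = p"
        using D[OF v(5) v(1) ge(1) None p] D[OF v(5) v(2) ge(2) None p] D[OF v(5) v(3) ge(3) None p] by auto
      have h1: "e!0*a!0 + e!1*a!1 + e!2*a!2 = e!0*c!0 + e!1*c!1 + e!2*c!2" using h unfolding DV by simp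
      have h2: "e!0*b!0 + e!1*b!1 + e!2*b!2 = e!0*c!0 + e!1*c!1 + e!2*c!2" using h unfolding DV by simp
      have "e!1 = 0" by (rule alg1[OF h1 h2 a0(1) a0(2) n0[OF a0(1,2)]])
      thus False using vecs_nz[OF v(5), of 1] by simp
    qed
  next
    case None
    then obtain p where p: "g1 = Dot p" by (cases g1) auto
    have hd: "dotp d a = p" "dotp d b = p" "dotp d c = p" "p \<noteq> dotp d d"
      using D[OF v(4) v(1) gd(1) None p] D[OF v(4) v(2) gd(2) None p] D[OF v(4) v(3) gd(3) None p] by auto
    have h1: "d!0*a!0 + d!1*a!1 + d!2*a!2 = d!0*c!0 + d!1*c!1 + d!2*c!2" using hd unfolding DV by simp
    have h2: "d!0*b!0 + d!1*b!1 + d!2*b!2 = d!0*c!0 + d!1*c!1 + d!2*c!2" using hd unfolding DV by simp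
    show False
    proof (cases "cinfo g2")
      case (Some ks')
      obtain k' s' where ks': "cinfo g2 = Some (k', s')" using Some by (cases ks') auto
      have a0: "a!0 = c!0" "b!0 = c!0" using abc0[OF v(5) dd(7,8,9) ge(1,2,3) ks'] by auto
      have "d!1 = 0" by (rule alg1[OF h1 h2 a0(1) a0(2) n0[OF a0(1,2)]])
      thus False using vecs_nz[OF v(4), of 1] by simp
    next
      case None
      then obtain q where q: "g2 = Dot q" by (cases g2) auto
      have he: "dotp e a = q" "dotp e b = q" "dotp e c = q" "dotp e d = q"
        using D[OF v(5) v(1) ge(1) None q] D[OF v(5) v(2) ge(2) None q] D[OF v(5) v(3) ge(3) None q]
          D[OF v(5) v(4) ge(4) None q] by auto
      have e1: "e!0*a!0 + e!1*a!1 + e!2*a!2 = e!0*c!0 + e!1*c!1 + e!2*c!2" using he unfolding DV by simp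
      have e2: "e!0*b!0 + e!1*b!1 + e!2*b!2 = e!0*c!0 + e!1*c!1 + e!2*c!2" using he unfolding DV by simp
      have e3: "e!0*a!0 + e!1*a!1 + e!2*a!2 = e!0*d!0 + e!1*d!1 + e!2*d!2" using he unfolding DV by simp
      have d3: "d!0*a!0 + d!1*a!1 + d!2*a!2 \<noteq> d!0*d!0 + d!1*d!1 + d!2*d!2" using hd unfolding DV by simp
      have par: "d!0*e!1 = d!1*e!0 \<and> d!0*e!2 = d!2*e!0 \<and> d!1*e!2 = d!2*e!1"
        apply (rule algPar[where ux="a!0-c!0" and uy="a!1-c!1" and uz="a!2-c!2" and vx="b!0-c!0" and vy="b!1-c!1" and vz="b!2-c!2"])
        using nc[unfolded coll_def] apply simp
        using h1 h2 e1 e2 by algebra+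
      show False
        using algX[OF par[THEN conjunct1] par[THEN conjunct2, THEN conjunct1] par[THEN conjunct2, THEN conjunct2]
          vecs_nz[OF v(4), of 0] vecs_nz[OF v(5), of 0] e3 d3] by simp
    qed
  qed
qed

lemma cherry:
  assumes "leftover r T" "T \<subseteq> vecs 3" and lin: "linear_order_on {x. x \<noteq> 0} r"
  shows "x \<in> T \<Longrightarrow> y \<in> T \<Longrightarrow> z \<in> T \<Longrightarrow> x \<noteq> y \<Longrightarrow> x \<noteq> z \<Longrightarrow> y \<noteq> z \<Longrightarrow>
    phi r x y = phi r x z \<or> phi r y x = phi r y z \<or> phi r z x = phi r z y"
  using assms(1,2)
proof (induction arbitrary: x y z rule: leftover.induct)
  case (single x0)
  thus ?case by auto
next
  case (split A B g)
  have sym: "phi r u w = phi r w u" if "u \<in> A \<union> B" "w \<in> A \<union> B" for u w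
    using phi_sym[OF lin] that split.prems(7) by auto
  have sA: "A \<subseteq> vecs 3" and sB: "B \<subseteq> vecs 3" using split.prems(7) by auto
  show ?case
  proof (cases "x \<in> A"; cases "y \<in> A"; cases "z \<in> A")
    assume "x \<in> A" "y \<in> A" "z \<in> A" thus ?case using split.IH(1)[OF _ _ _ _ _ _ sA] split.prems by blast
  next
    assume "x \<notin> A" "y \<notin> A" "z \<notin> A"
    hence "x \<in> B" "y \<in> B" "z \<in> B" using split.prems by auto
    thus ?case using split.IH(2)[OF _ _ _ _ _ _ sB] split.prems by blast
  next
    assume h: "x \<in> A" "y \<in> A" "z \<notin> A"
    hence "z \<in> B" using split.prems by auto
    hence "phi r x z = g" "phi r y z = g" using h split.hyps(7) by auto
    thus ?case using sym split.prems by metis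
  next
    assume h: "x \<in> A" "y \<notin> A" "z \<in> A"
    hence "y \<in> B" using split.prems by auto
    hence "phi r x y = g" "phi r z y = g" using h split.hyps(7) by auto
    thus ?case using sym split.prems by metis
  next
    assume h: "x \<in> A" "y \<notin> A" "z \<notin> A"
    hence "y \<in> B" "z \<in> B" using split.prems by auto
    hence "phi r x y = g" "phi r x z = g" using h split.hyps(7) by auto
    thus ?case by simp
  next
    assume h: "x \<notin> A" "y \<in> A" "z \<in> A"
    hence "x \<in> B" using split.prems by auto
    hence "phi r y x = g" "phi r z x = g" using h split.hyps(7) by auto
    thus ?case using sym split.prems by metis
  next
    assume h: "x \<notin> A" "y \<in> A" "z \<notin> A"
    hence "x \<in> B" "z \<in> B" using split.prems by auto
    hence "phi r y x = g" "phi r y z = g" using h split.hyps(7) by auto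
    thus ?case by simp
  next
    assume h: "x \<notin> A" "y \<notin> A" "z \<in> A"
    hence "x \<in> B" "y \<in> B" using split.prems by auto
    hence "phi r z x = g" "phi r z y = g" using h split.hyps(7) by auto
    thus ?case by simp
  qed
qed

lemma two_elems: "2 \<le> card A \<Longrightarrow> \<exists>a b. a \<in> A \<and> b \<in> A \<and> a \<noteq> b"
proof -
  assume h: "2 \<le> card A"
  hence f: "finite A" by (metis card.infinite not_numeral_le_zero)
  show ?thesis using card_le_Suc0_iff_eq[OF f] h by auto
qed

lemma three_elems: "3 \<le> card A \<Longrightarrow> \<exists>x y z. x \<in> A \<and> y \<in> A \<and> z \<in> A \<and> x \<noteq> y \<and> x \<noteq> z \<and> y \<noteq> z"
proof -
  assume h: "3 \<le> card A"
  hence f: "finite A" by (metis card.infinite not_numeral_le_zero)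
  obtain x where x: "x \<in> A" using h by fastforce
  have "card (A - {x}) \<ge> 2" using h x f by simp
  then obtain y z where "y \<in> A - {x}" "z \<in> A - {x}" "y \<noteq> z" using two_elems by blast
  thus ?thesis using x by blast
qed

lemma Y_set:
  fixes r :: "('a::field) rel"
  assumes lin: "linear_order_on {x. x \<noteq> 0} r"
    and sub: "A \<subseteq> vecs 3" "B \<subseteq> vecs 3" and lB: "leftover r B" and dis: "A \<inter> B = {}"
    and cA: "2 \<le> card A" and cB: "3 \<le> card B" and g: "\<forall>a\<in>A. \<forall>b\<in>B. phi r a b = g"
  shows False
proof -
  obtain a1 a2 where a: "a1 \<in> A" "a2 \<in> A" "a1 \<noteq> a2" using two_elems[OF cA] by blast
  obtain x y z where b: "x \<in> B" "y \<in> B" "z \<in> B" "x \<noteq> y" "x \<noteq> z" "y \<noteq> z" using three_elems[OF cB] by blast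
  have ne: "u \<noteq> w" if "u \<in> A" "w \<in> B" for u w using dis that by auto
  have v: "a1 \<in> vecs 3" "a2 \<in> vecs 3" "x \<in> vecs 3" "y \<in> vecs 3" "z \<in> vecs 3" using a b sub by auto
  note ch = cherry[OF lB sub(2) lin b]
  note G = g[rule_format]
  show False using ch
  proof (elim disjE)
    assume st: "phi r x y = phi r x z"
    show False by (rule Ylem[OF v(1,2,4,5,3) a(3) b(6) b(4)[symmetric] b(5)[symmetric]
          ne[OF a(1) b(2)] ne[OF a(1) b(3)] ne[OF a(1) b(1)] ne[OF a(2) b(2)] ne[OF a(2) b(3)] ne[OF a(2) b(1)]
          st G[OF a(1) b(2)] G[OF a(1) b(3)] G[OF a(1) b(1)] G[OF a(2) b(2)] G[OF a(2) b(3)] G[OF a(2) b(1)]])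
  next
    assume st: "phi r y x = phi r y z"
    show False by (rule Ylem[OF v(1,2,3,5,4) a(3) b(5) b(4) b(6)[symmetric]
          ne[OF a(1) b(1)] ne[OF a(1) b(3)] ne[OF a(1) b(2)] ne[OF a(2) b(1)] ne[OF a(2) b(3)] ne[OF a(2) b(2)]
          st G[OF a(1) b(1)] G[OF a(1) b(3)] G[OF a(1) b(2)] G[OF a(2) b(1)] G[OF a(2) b(3)] G[OF a(2) b(2)]])
  next
    assume st: "phi r z x = phi r z y"
    show False by (rule Ylem[OF v(1,2,3,4,5) a(3) b(4) b(5) b(6)
          ne[OF a(1) b(1)] ne[OF a(1) b(2)] ne[OF a(1) b(3)] ne[OF a(2) b(1)] ne[OF a(2) b(2)] ne[OF a(2) b(3)]
          st G[OF a(1) b(1)] G[OF a(1) b(2)] G[OF a(1) b(3)] G[OF a(2) b(1)] G[OF a(2) b(2)] G[OF a(2) b(3)]])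
  qed
qed

lemma X_core:
  fixes r :: "('a::field) rel"
  assumes lin: "linear_order_on {x. x \<noteq> 0} r"
    and sub: "B \<subseteq> vecs 3" and lB: "leftover r B" and cB: "3 \<le> card B"
    and v: "d \<in> vecs 3" "e \<in> vecs 3" and n: "d \<notin> B" "e \<notin> B" "e \<noteq> d"
    and g1: "\<forall>b\<in>B. phi r d b = g1" and g2: "\<forall>b\<in>B. phi r e b = g2" and ed: "phi r e d = g2"
  shows False
proof -
  obtain x y z where b: "x \<in> B" "y \<in> B" "z \<in> B" "x \<noteq> y" "x \<noteq> z" "y \<noteq> z" using three_elems[OF cB] by blast
  have vb: "x \<in> vecs 3" "y \<in> vecs 3" "z \<in> vecs 3" using b sub by auto
  have nd: "d \<noteq> x" "d \<noteq> y" "d \<noteq> z" "e \<noteq> x" "e \<noteq> y" "e \<noteq> z" using n b by auto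
  have G1: "phi r d x = g1" "phi r d y = g1" "phi r d z = g1" using g1 b by auto
  have G2: "phi r e x = g2" "phi r e y = g2" "phi r e z = g2" using g2 b by auto
  note ch = cherry[OF lB sub lin b]
  show False using ch
  proof (elim disjE)
    assume st: "phi r x y = phi r x z"
    show False by (rule Xlem[OF vb(2,3,1) v b(6) b(4)[symmetric] b(5)[symmetric] nd(2,3,1) nd(5,6,4) n(3)
          st G1(2,3,1) G2(2,3,1) ed])
  next
    assume st: "phi r y x = phi r y z"
    show False by (rule Xlem[OF vb(1,3,2) v b(5) b(4) b(6)[symmetric] nd(1,3,2) nd(4,6,5) n(3)
          st G1(1,3,2) G2(1,3,2) ed])
  next
    assume st: "phi r z x = phi r z y"
    show False by (rule Xlem[OF vb(1,2,3) v b(4) b(5) b(6) nd(1,2,3) nd(4,5,6) n(3)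
          st G1(1,2,3) G2(1,2,3) ed])
  qed
qed

lemma X_set:
  fixes r :: "('a::field) rel"
  assumes lin: "linear_order_on {x. x \<noteq> 0} r"
    and v: "e \<in> vecs 3" and sub: "B \<subseteq> vecs 3" and n: "e \<notin> B" and lB: "leftover r B"
    and cB: "card B = 5" and g: "\<forall>b\<in>B. phi r e b = g"
  shows False
  using lB
proof cases
  case (single x)
  thus False using cB by simp
next
  case (split B1 B2 h)
  have fin: "finite B" using cB by (metis card.infinite zero_neq_numeral)
  hence fin2: "finite B1" "finite B2" using split(1) by auto
  have cc: "card B1 + card B2 = 5" using card_Un_disjoint[OF fin2 split(4)] split(1) cB by simp
  have c1: "card B1 \<ge> 1" using split(2) fin2(1) by (simp add: Suc_leI card_gt_0_iff)
  have c2: "card B2 \<ge> 1" using split(3) fin2(2) by (simp add: Suc_leI card_gt_0_iff)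
  have s1: "B1 \<subseteq> vecs 3" "B2 \<subseteq> vecs 3" using sub split(1) by auto
  have H: "\<forall>a\<in>B1. \<forall>b\<in>B2. phi r a b = h" using split(8) .
  have H': "\<forall>b\<in>B2. \<forall>a\<in>B1. phi r b a = h" using H phi_sym[OF lin] s1 by (metis subsetD)
  have dis': "B2 \<inter> B1 = {}" using split(4) by auto
  consider "card B1 = 1" | "card B2 = 1" | "card B1 \<ge> 2 \<and> card B2 \<ge> 3" | "card B1 \<ge> 3 \<and> card B2 \<ge> 2"
    using cc c1 c2 by linarith
  thus False
  proof cases
    case 1
    then obtain d where d: "B1 = {d}" using card_1_singletonE by blast
    show False
      apply (rule X_core[OF lin s1(2) split(6) _ _ v, of d h g])
      using cc 1 d s1 split n g H by auto
  next
    case 2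
    then obtain d where d: "B2 = {d}" using card_1_singletonE by blast
    show False
      apply (rule X_core[OF lin s1(1) split(5) _ _ v, of d h g])
      using cc 2 d s1 split n g H' by auto
  next
    case 3 thus False using Y_set[OF lin s1 split(6) split(4) _ _ H] by auto
  next
    case 4 thus False using Y_set[OF lin s1(2) s1(1) split(5) dis' _ _ H'] by auto
  qed
qed

theorem corollary3p12:
  fixes r :: "('a::{finite,field}) rel" and S :: "'a list set"
  assumes "odd (card (UNIV :: 'a set))"
    and "linear_order_on {x. x \<noteq> 0} r"
    and "S \<subseteq> vecs 3"
    and "card S = 6"
  shows "\<not> leftover r S"
proof
  assume lS: "leftover r S"
  note lin = assms(2) and sub = assms(3) and cS = assms(4)
  from lS show False
  proof cases
    case (single x)
    thus False using cS by simp
  next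
    case (split A B h)
    have fin: "finite S" using cS by (metis card.infinite zero_neq_numeral)
    hence fin2: "finite A" "finite B" using split(1) by auto
    have cc: "card A + card B = 6" using card_Un_disjoint[OF fin2 split(4)] split(1) cS by simp
    have c1: "card A \<ge> 1" using split(2) fin2(1) by (simp add: Suc_leI card_gt_0_iff)
    have c2: "card B \<ge> 1" using split(3) fin2(2) by (simp add: Suc_leI card_gt_0_iff)
    have s1: "A \<subseteq> vecs 3" "B \<subseteq> vecs 3" using sub split(1) by auto
    have H: "\<forall>a\<in>A. \<forall>b\<in>B. phi r a b = h" using split(8) .
    have H': "\<forall>b\<in>B. \<forall>a\<in>A. phi r b a = h" using H phi_sym[OF lin] s1 by (metis subsetD)
    have dis': "B \<inter> A = {}" using split(4) by auto
    consider "card A = 1" | "card B = 1" | "card A \<ge> 2 \<and> card B \<ge> 3" | "card A \<ge> 3 \<and> card B \<ge> 2"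
      using cc c1 c2 by linarith
    thus False
    proof cases
      case 1
      then obtain e where e: "A = {e}" using card_1_singletonE by blast
      show False
        apply (rule X_set[OF lin _ s1(2) _ split(6), of e h])
        using cc 1 e s1 split H by auto
    next
      case 2
      then obtain e where e: "B = {e}" using card_1_singletonE by blast
      show False
        apply (rule X_set[OF lin _ s1(1) _ split(5), of e h])
        using cc 2 e s1 split H' by auto
    next
      case 3 thus False using Y_set[OF lin s1 split(6) split(4) _ _ H] by auto
    next
      case 4 thus False using Y_set[OF lin s1(2) s1(1) split(5) dis' _ _ H'] by auto
    qed
  qed
qed

end
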